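(* For all integers $a\ge0$, $b\ge0$ and $d\ge1$, $$\sum_{c=0}^{b}\binom{b}{c}(2c+d-2)!!\,(2(a+b-c)+1)!!=\frac{(2a+1)!!\,(d-2)!!\,(2(a+b)+d+1)!!}{(2a+d+1)!!}.$$
   Context: $n!!$ denotes the double factorial, with the conventions $0!!=(-1)!!=1$. *)

theory Defs
  imports Complex_Main
begin

text \<open>Double factorial n!! for integers n, with the conventions 0!! = (-1)!! = 1
  (and, as a total extension, n!! = 1 for all n \<le> 0).\<close>
function dfact :: "int \<Rightarrow> nat" where
  "dfact n = (if n \<le> 0 then 1 else nat n * dfact (n - 2))"
  by auto
termination by (relation "measure (\<lambda>n. nat n)") auto

declare dfact.simps[simp del]

end

theory Submission
  imports Defs
begin

lemma dfact_rec: "n > 0 \<Longrightarrow> dfact n = nat n * dfact (n - 2)"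
  by (subst dfact.simps) simp

lemma dfact_pos: "dfact n > 0"
proof (induction n rule: dfact.induct)
  case (1 n) then show ?case by (subst dfact.simps) auto
qed

lemma dfact_rec2: "n \<ge> 0 \<Longrightarrow> dfact (n + 2) = nat (n + 2) * dfact n"
  using dfact_rec[of "n+2"] by simp

definition S :: "nat \<Rightarrow> nat \<Rightarrow> int \<Rightarrow> real" where
  "S a b d = (\<Sum>c\<le>b. real (b choose c) * (real (dfact (2*int c + d - 2))
            * real (dfact (2*(int a + int b - int c) + 1))))"

lemma S_Suc: "S a (Suc b) d = S (Suc a) b d + S a b (d + 2)"
proof -
  define f where "f c = real (dfact (2*int c + d - 2)) * real (dfact (2*(int a + int (Suc b) - int c) + 1))" for c
  have "S a (Suc b) d = (\<Sum>c\<le>Suc b. real (Suc b choose c) * f c)"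
    unfolding S_def f_def by simp
  also have "\<dots> = f 0 + (\<Sum>c\<le>b. real (b choose c) * f (Suc c)) + (\<Sum>c\<le>b. real (b choose Suc c) * f (Suc c))"
    by (subst sum.atMost_Suc_shift) (simp add: sum.distrib algebra_simps)
  moreover have "f 0 + (\<Sum>c\<le>b. real (b choose Suc c) * f (Suc c)) = (\<Sum>c\<le>Suc b. real (b choose c) * f c)"
    by (subst sum.atMost_Suc_shift) simp
  moreover have "(\<Sum>c\<le>Suc b. real (b choose c) * f c) = (\<Sum>c\<le>b. real (b choose c) * f c)" by simp
  moreover have "(\<Sum>c\<le>b. real (b choose c) * f c) = S (Suc a) b d"
    unfolding S_def f_def by (intro sum.cong refl) (simp add: algebra_simps)
  moreover have "(\<Sum>c\<le>b. real (b choose c) * f (Suc c)) = S a b (d+2)"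
    unfolding S_def f_def by (intro sum.cong refl) (simp add: algebra_simps)
  ultimately show ?thesis by simp
qed

lemma main:
  "d \<ge> 1 \<Longrightarrow> S a b d * real (dfact (2*int a + d + 1))
     = real (dfact (2*int a + 1)) * real (dfact (d - 2)) * real (dfact (2*(int a + int b) + d + 1))"
proof (induction b arbitrary: a d)
  case 0
  then show ?case unfolding S_def by simp
next
  case (Suc b)
  define A where "A = real (dfact (2*int a + 1))"
  define Dm where "Dm = real (dfact (d - 2))"
  define E where "E = real (dfact (2*(int a + int b) + d + 3))"
  define F where "F = real (dfact (2*int a + d + 1))"
  have r1: "real (dfact (2*int a + d + 3)) = (2*a + d + 3) * F"
    unfolding F_def using Suc.prems dfact_rec[of "2 * int a + d + 3"] by (simp add: add.commute add.left_commute)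
  have r2: "real (dfact (2*int (Suc a) + 1)) = (2*a + 3) * A"
    unfolding A_def
  proof -
    have "2*int (Suc a) + 1 = (2*int a + 1) + 2" by simp
    then show "real (dfact (2*int (Suc a) + 1)) = (2*a + 3) * real (dfact (2*int a + 1))"
      using dfact_rec2[of "2*int a + 1"] by simp
  qed
  have r3: "real (dfact (d + 2 - 2)) = d * Dm"
    unfolding Dm_def using Suc.prems dfact_rec[of "d"] by simp
  have h1: "2*int (Suc a) + d + 1 = 2*int a + d + 3" "2 * (int (Suc a) + int b) + d + 1 = 2*(int a + int b) + d + 3"
    "2 * int a + (d + 2) + 1 = 2*int a + d + 3" "2 * (int a + int b) + (d + 2) + 1 = 2*(int a + int b) + d + 3" by simp_all
  have IH1: "S (Suc a) b d * ((2*a + d + 3) * F) = (2*a+3) * A * Dm * E"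
    using Suc.IH[of d "Suc a"] Suc.prems
    unfolding h1 r1 r2 Dm_def[symmetric] E_def[symmetric] by (simp add: algebra_simps)
  have IH2: "S a b (d+2) * ((2*a + d + 3) * F) = A * (d * Dm) * E"
    using Suc.IH[of "d+2" a] Suc.prems
    unfolding h1 r1 r3 A_def[symmetric] E_def[symmetric] by (simp add: algebra_simps)
  have pos: "(2*a + d + 3) > (0::real)" using Suc.prems by simp
  have "(S (Suc a) b d + S a b (d+2)) * F * (2*a + d + 3) = A * Dm * E * (2*a + d + 3)"
    using IH1 IH2 by (simp add: algebra_simps)
  then have "(S (Suc a) b d + S a b (d+2)) * F = A * Dm * E"
    using pos by simp
  then show ?case unfolding S_Suc A_def Dm_def E_def F_def
    by (simp add: algebra_simps)
qed

theorem lemma3p5: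
  fixes a b d :: int
  assumes "a \<ge> 0" and "b \<ge> 0" and "d \<ge> 1"
  shows "(\<Sum>c=0..b. real (nat b choose nat c) * real (dfact (2*c + d - 2))
            * real (dfact (2*(a + b - c) + 1)))
         = real (dfact (2*a + 1)) * real (dfact (d - 2)) * real (dfact (2*(a + b) + d + 1))
           / real (dfact (2*a + d + 1))"
proof -
  obtain n m where n: "a = int n" and m: "b = int m" using assms
    by (metis nonneg_int_cases)
  have "{0..b} = int ` {..m}" using m
    by (auto simp: image_iff) (metis atLeastAtMost_iff atMost_iff int_nat_eq nat_le_iff)
  then have "(\<Sum>c=0..b. real (nat b choose nat c) * real (dfact (2*c + d - 2))
            * real (dfact (2*(a + b - c) + 1))) = S n m d"
    unfolding S_def n m by (simp add: sum.reindex algebra_simps)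
  moreover have "real (dfact (2*a + d + 1)) > 0" using dfact_pos by simp
  ultimately show ?thesis using main[OF assms(3), of n m] n m
    by (simp add: field_simps)
qed

end
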